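(* Let $X\subset\mathbb{R}^p$ be compact, $\rho$ a probability measure on $X\times\mathbb{R}$ with marginal $\rho_X$ and regression function $f_\rho$, and $\mathcal{K}$ a Mercer kernel. Assume that for constants $c_\rho>0$, $0<\theta\le1$: $\rho_X(\{\mathbf{x}\in X:d(\mathbf{x},\partial X)<t\})\le c_\rho t$ for all $t>0$; $\rho_X$ has a density $p$ with $\sup_Xp\le c_\rho$ and $|p(\mathbf{x})-p(\mathbf{u})|\le c_\rho\|\mathbf{x}-\mathbf{u}\|^\theta$; and $\nabla f_\rho\in\mathbb{H}^p_{\mathcal{K}}$. Let $s>0$, $r\ge1$ and $\vec f\in\mathcal{F}_r$. Then $$\frac{\widetilde M_2\, s^{p+2+\theta}}{p}\int_{X_s}\|\vec f(\mathbf{x})-\nabla f_\rho(\mathbf{x})\|^2d\rho_X(\mathbf{x})\le Q(\vec f).$$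
   Context: $d(\mathbf{x},\partial X)$ is the Euclidean distance to the boundary of $X$. $\mathbb{H}^p_{\mathcal{K}}$ is the $p$-fold product of the RKHS $\mathbb{H}_{\mathcal{K}}$ (norm $\|\cdot\|_{\mathcal{K}}$), and $\mathcal{F}_r=\{\vec f\in\mathbb{H}^p_{\mathcal{K}}:\sum_{i=1}^p\|f^i\|_{\mathcal{K}}\le r\}$. With $\omega^s(\mathbf{x})=\exp(-\|\mathbf{x}\|^2/(2s^2))$, $$Q(\vec f)=\int_X\int_X\omega^s(\mathbf{x}-\mathbf{u})\big((\vec f(\mathbf{x})-\nabla f_\rho(\mathbf{x}))\cdot(\mathbf{u}-\mathbf{x})\big)^2d\rho_X(\mathbf{x})\,d\rho_X(\mathbf{u}),$$ $X_s=\{\mathbf{x}\in X: d(\mathbf{x},\partial X)>s\text{ and }p(\mathbf{x})\ge(1+c_\rho)s^\theta\}$, and $\widetilde M_2=\int_{\|\mathbf{t}\|\le1,\ \mathbf{t}\in\mathbb{R}^p}e^{-\|\mathbf{t}\|^2/2}\|\mathbf{t}\|^2d\mathbf{t}$. *)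

theory Defs
  imports "HOL-Analysis.Analysis" "HOL-Probability.Probability"
begin

text \<open>Finite kernel expansions  sum_i a_i K(x_i, .)  represented as lists of (point, coefficient).\<close>

definition kexp_eval :: "('a \<Rightarrow> 'a \<Rightarrow> real) \<Rightarrow> ('a \<times> real) list \<Rightarrow> 'a \<Rightarrow> real" where
  "kexp_eval K L x = (\<Sum>(y, a) \<leftarrow> L. a * K y x)"

definition kexp_norm :: "('a \<Rightarrow> 'a \<Rightarrow> real) \<Rightarrow> ('a \<times> real) list \<Rightarrow> real" where
  "kexp_norm K L = sqrt (\<Sum>(x, a) \<leftarrow> L. \<Sum>(y, b) \<leftarrow> L. a * b * K x y)"

definition kexp_minus :: "('a \<times> real) list \<Rightarrow> ('a \<times> real) list \<Rightarrow> ('a \<times> real) list" where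
  "kexp_minus L M = L @ map (\<lambda>(y, b). (y, - b)) M"

definition mercer_kernel :: "'a::topological_space set \<Rightarrow> ('a \<Rightarrow> 'a \<Rightarrow> real) \<Rightarrow> bool" where
  "mercer_kernel X K \<longleftrightarrow>
     continuous_on (X \<times> X) (\<lambda>(x, y). K x y) \<and>
     (\<forall>x\<in>X. \<forall>y\<in>X. K x y = K y x) \<and>
     (\<forall>L. set (map fst L) \<subseteq> X \<longrightarrow> (\<Sum>(x, a) \<leftarrow> L. \<Sum>(y, b) \<leftarrow> L. a * b * K x y) \<ge> 0)"

text \<open>RKHS H_K on X as the completion of the span of the K(x,.), x in X:
  S is an approximating sequence for f if it is Cauchy in the pre-Hilbert norm and
  converges pointwise on X to f.\<close>

definition rkhs_approx :: "'a set \<Rightarrow> ('a \<Rightarrow> 'a \<Rightarrow> real) \<Rightarrow> ('a \<Rightarrow> real) \<Rightarrow> (nat \<Rightarrow> ('a \<times> real) list) \<Rightarrow> bool" where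
  "rkhs_approx X K f S \<longleftrightarrow>
     (\<forall>n. set (map fst (S n)) \<subseteq> X) \<and>
     (\<forall>e>0. \<exists>N. \<forall>m\<ge>N. \<forall>n\<ge>N. kexp_norm K (kexp_minus (S m) (S n)) < e) \<and>
     (\<forall>x\<in>X. (\<lambda>n. kexp_eval K (S n) x) \<longlonglongrightarrow> f x)"

definition in_rkhs :: "'a set \<Rightarrow> ('a \<Rightarrow> 'a \<Rightarrow> real) \<Rightarrow> ('a \<Rightarrow> real) \<Rightarrow> bool" where
  "in_rkhs X K f \<longleftrightarrow> (\<exists>S. rkhs_approx X K f S)"

definition rkhs_norm :: "'a set \<Rightarrow> ('a \<Rightarrow> 'a \<Rightarrow> real) \<Rightarrow> ('a \<Rightarrow> real) \<Rightarrow> real" where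
  "rkhs_norm X K f = Inf {lim (\<lambda>n. kexp_norm K (S n)) | S. rkhs_approx X K f S}"

definition F_ball :: "'a::euclidean_space set \<Rightarrow> ('a \<Rightarrow> 'a \<Rightarrow> real) \<Rightarrow> real \<Rightarrow> ('a \<Rightarrow> 'a) set" where
  "F_ball X K r = {f. (\<forall>i\<in>Basis. in_rkhs X K (\<lambda>x. f x \<bullet> i)) \<and>
                      (\<Sum>i\<in>Basis. rkhs_norm X K (\<lambda>x. f x \<bullet> i)) \<le> r}"

definition omega :: "real \<Rightarrow> 'a::real_normed_vector \<Rightarrow> real" where
  "omega s x = exp (- (norm x)\<^sup>2 / (2 * s\<^sup>2))"

definition Q_fun :: "'a::euclidean_space set \<Rightarrow> 'a measure \<Rightarrow> real \<Rightarrow> ('a \<Rightarrow> 'a) \<Rightarrow> ('a \<Rightarrow> 'a) \<Rightarrow> real" where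
  "Q_fun X \<mu> s g f =
     (LINT u:X|\<mu>. (LINT x:X|\<mu>. omega s (x - u) * ((f x - g x) \<bullet> (u - x))\<^sup>2))"

definition X_s :: "'a::euclidean_space set \<Rightarrow> ('a \<Rightarrow> real) \<Rightarrow> real \<Rightarrow> real \<Rightarrow> real \<Rightarrow> 'a set" where
  "X_s X pd c \<theta> s = {x\<in>X. infdist x (frontier X) > s \<and> pd x \<ge> (1 + c) * s powr \<theta>}"

definition M2_tilde :: "'a::euclidean_space itself \<Rightarrow> real" where
  "M2_tilde _ = (LINT t:(cball (0::'a) 1)|lborel. exp (- (norm t)\<^sup>2 / 2) * (norm t)\<^sup>2)"

end

theory Submission
  imports Defs
begin

lemma qf_snoc:
  fixes K :: "'a \<Rightarrow> 'a \<Rightarrow> real"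
  assumes sym: "\<And>y. y \<in> fst ` set L \<Longrightarrow> K x y = K y x"
  shows "(\<Sum>(x1, a) \<leftarrow> L @ [(x,t)]. \<Sum>(y, b) \<leftarrow> L @ [(x,t)]. a * b * K x1 y)
       = (\<Sum>(x1, a) \<leftarrow> L. \<Sum>(y, b) \<leftarrow> L. a * b * K x1 y) + 2 * t * kexp_eval K L x + t * t * K x x"
proof -
  have e1: "(\<Sum>(x1, a) \<leftarrow> L. a * t * K x1 x) = t * kexp_eval K L x"
    unfolding kexp_eval_def by (induction L) (auto simp: algebra_simps)
  have e2: "(\<Sum>(y, b) \<leftarrow> L. t * b * K x y) = t * kexp_eval K L x"
    using sym unfolding kexp_eval_def by (induction L) (auto simp: algebra_simps)
  have e3: "(\<Sum>(x1, a) \<leftarrow> L. (\<Sum>(y, b) \<leftarrow> L. a * b * K x1 y) + a * t * K x1 x)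
     = (\<Sum>(x1, a) \<leftarrow> L. \<Sum>(y, b) \<leftarrow> L. a * b * K x1 y) + (\<Sum>(x1, a) \<leftarrow> L. a * t * K x1 x)"
    by (simp add: case_prod_unfold sum_list_addf)
  show ?thesis using e1 e2 e3 by (simp add: case_prod_beta algebra_simps)
qed

lemma kexp_CS:
  assumes m: "mercer_kernel X K" and L: "set (map fst L) \<subseteq> X" and x: "x \<in> X"
  shows "(kexp_eval K L x)^2 \<le> (kexp_norm K L)^2 * K x x"
proof -
  define q where "q = (\<Sum>(x1, a) \<leftarrow> L. \<Sum>(y, b) \<leftarrow> L. a * b * K x1 y)"
  define e where "e = kexp_eval K L x"
  define k where "k = K x x"
  have psd: "\<And>L. set (map fst L) \<subseteq> X \<Longrightarrow> (\<Sum>(x, a) \<leftarrow> L. \<Sum>(y, b) \<leftarrow> L. a * b * K x y) \<ge> 0"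
    using m unfolding mercer_kernel_def by blast
  have q0: "q \<ge> 0" using psd[OF L] unfolding q_def .
  have nq: "(kexp_norm K L)^2 = q" using q0 unfolding kexp_norm_def q_def by simp
  have k0: "k \<ge> 0" using psd[of "[(x,1)]"] x unfolding k_def by simp
  have quad: "q + 2 * t * e + t * t * k \<ge> 0" for t
  proof -
    have "set (map fst (L @ [(x,t)])) \<subseteq> X" using L x by auto
    from psd[OF this] have "0 \<le> (\<Sum>(x1, a) \<leftarrow> L @ [(x,t)]. \<Sum>(y, b) \<leftarrow> L @ [(x,t)]. a * b * K x1 y)" .
    also have "\<dots> = q + 2 * t * e + t * t * k"
      unfolding q_def e_def k_def
      by (rule qf_snoc) (use m L x in \<open>auto simp: mercer_kernel_def\<close>)
    finally show ?thesis .
  qed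
  have "e^2 \<le> q * k"
  proof (cases "k = 0")
    case True
    have "e = 0"
    proof (rule ccontr)
      assume "e \<noteq> 0"
      have "q + 2 * (- (q + 1) / (2 * e)) * e + 0 \<ge> 0" using quad[of "- (q + 1) / (2 * e)"] True by simp
      with \<open>e \<noteq> 0\<close> show False by (simp add: field_simps)
    qed
    then show ?thesis using True by simp
  next
    case False
    then have kp: "k > 0" using k0 by simp
    have "0 \<le> q + 2 * (- e / k) * e + (- e / k) * (- e / k) * k" by (rule quad)
    also have "\<dots> = q - e^2 / k" using kp by (simp add: field_simps power2_eq_square)
    finally show ?thesis using kp by (simp add: field_simps)
  qed
  then show ?thesis unfolding nq e_def k_def .
qed

lemma kexp_eval_minus: "kexp_eval K (kexp_minus A B) x = kexp_eval K A x - kexp_eval K B x"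
  unfolding kexp_eval_def kexp_minus_def
  by (induction B) (auto simp: case_prod_unfold o_def)

lemma kexp_eval_cont:
  assumes m: "mercer_kernel X K" and L: "set (map fst L) \<subseteq> X"
  shows "continuous_on X (kexp_eval K L)"
proof -
  have c: "continuous_on (X \<times> X) (\<lambda>(x, y). K x y)" using m unfolding mercer_kernel_def by blast
  have cy: "continuous_on X (K y)" if "y \<in> X" for y
  proof -
    have "continuous_on X ((\<lambda>(x, y). K x y) \<circ> (\<lambda>x. (y, x)))"
      by (rule continuous_on_compose) (auto intro!: continuous_intros continuous_on_subset[OF c] simp: that)
    then show ?thesis by (simp add: o_def)
  qed
  show ?thesis using L unfolding kexp_eval_def
  proof (induction L)
    case Nil then show ?case by simp
  next
    case (Cons p L)
    obtain y a where p: "p = (y, a)" by force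
    have "y \<in> X" using Cons.prems p by auto
    have "continuous_on X (\<lambda>x. a * K y x + (\<Sum>(y, a)\<leftarrow>L. a * K y x))"
      using Cons cy[OF \<open>y \<in> X\<close>] by (auto intro!: continuous_intros)
    then show ?case by (simp add: p)
  qed
qed

lemma rkhs_bounded:
  assumes X: "compact X" and m: "mercer_kernel X K" and f: "in_rkhs X K \<phi>"
  shows "\<exists>B. \<forall>x\<in>X. \<bar>\<phi> x\<bar> \<le> B"
proof -
  obtain S where S: "rkhs_approx X K \<phi> S" using f unfolding in_rkhs_def by blast
  have Sx: "\<And>n. set (map fst (S n)) \<subseteq> X"
    and Sc: "\<And>e. e>0 \<Longrightarrow> \<exists>N. \<forall>m\<ge>N. \<forall>n\<ge>N. kexp_norm K (kexp_minus (S m) (S n)) < e"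
    and Sl: "\<And>x. x\<in>X \<Longrightarrow> (\<lambda>n. kexp_eval K (S n) x) \<longlonglongrightarrow> \<phi> x"
    using S unfolding rkhs_approx_def by blast+
  have c: "continuous_on (X \<times> X) (\<lambda>(x, y). K x y)" using m unfolding mercer_kernel_def by blast
  have "continuous_on X ((\<lambda>(x, y). K x y) \<circ> (\<lambda>x. (x, x)))"
    by (rule continuous_on_compose) (auto intro!: continuous_intros continuous_on_subset[OF c])
  then have "continuous_on X (\<lambda>x. K x x)" by (simp add: o_def)
  then have "bounded ((\<lambda>x. K x x) ` X)" using X compact_continuous_image compact_imp_bounded by blast
  then obtain Bk where Bk: "\<And>x. x \<in> X \<Longrightarrow> \<bar>K x x\<bar> \<le> Bk" unfolding bounded_iff by force
  obtain N where N: "\<And>m n. m \<ge> N \<Longrightarrow> n \<ge> N \<Longrightarrow> kexp_norm K (kexp_minus (S m) (S n)) < 1"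
    using Sc[of 1] by auto
  have "bounded (kexp_eval K (S N) ` X)"
    using X kexp_eval_cont[OF m Sx] compact_continuous_image compact_imp_bounded by blast
  then obtain B0 where B0: "\<And>x. x \<in> X \<Longrightarrow> \<bar>kexp_eval K (S N) x\<bar> \<le> B0" unfolding bounded_iff by force
  have "\<bar>\<phi> x\<bar> \<le> B0 + sqrt Bk" if x: "x \<in> X" for x
  proof -
    have "\<bar>kexp_eval K (S m) x\<bar> \<le> B0 + sqrt Bk" if "m \<ge> N" for m
    proof -
      have Lm: "set (map fst (kexp_minus (S m) (S N))) \<subseteq> X"
        using Sx[of m] Sx[of N] by (auto simp: kexp_minus_def)
      define nn where "nn = kexp_norm K (kexp_minus (S m) (S N))"
      have nn0: "nn \<ge> 0" using m Lm unfolding nn_def kexp_norm_def mercer_kernel_def by simp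
      have kx0: "K x x \<ge> 0" using m x unfolding mercer_kernel_def
        by (metis (no_types, lifting) empty_set empty_subsetI fst_conv insert_subset list.simps(8,9,15)
          list.set_map mult_1 prod.simps(2) sum_list.Cons sum_list.Nil add_0_right)
      have nn1: "nn < 1" unfolding nn_def using N that by simp
      have "(kexp_eval K (S m) x - kexp_eval K (S N) x)^2 \<le> nn^2 * K x x"
        using kexp_CS[OF m Lm x] unfolding kexp_eval_minus nn_def .
      also have "\<dots> \<le> 1 * Bk"
        using Bk[OF x] nn0 nn1 kx0 by (intro mult_mono) (auto simp: power_le_one abs_le_iff)
      finally have "(kexp_eval K (S m) x - kexp_eval K (S N) x)^2 \<le> Bk" by simp
      then have "\<bar>kexp_eval K (S m) x - kexp_eval K (S N) x\<bar> \<le> sqrt Bk"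
        using real_le_rsqrt by (metis abs_le_square_iff real_sqrt_abs real_sqrt_le_iff)
      then show ?thesis using B0[OF x] by linarith
    qed
    then show ?thesis
      by (intro LIMSEQ_le_const2[OF tendsto_rabs[OF Sl[OF x]]]) auto
  qed
  then show ?thesis by blast
qed

lemma rkhs_measurable:
  fixes X :: "'a::euclidean_space set"
  assumes X: "compact X" and m: "mercer_kernel X K" and f: "in_rkhs X K \<phi>"
  shows "(\<lambda>x. if x \<in> X then \<phi> x else 0) \<in> borel_measurable borel"
proof -
  obtain S where S: "rkhs_approx X K \<phi> S" using f unfolding in_rkhs_def by blast
  have Sx: "\<And>n. set (map fst (S n)) \<subseteq> X"
    and Sl: "\<And>x. x\<in>X \<Longrightarrow> (\<lambda>n. kexp_eval K (S n) x) \<longlonglongrightarrow> \<phi> x"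
    using S unfolding rkhs_approx_def by blast+
  have XB: "X \<in> sets borel" by (rule borel_closed[OF compact_imp_closed[OF X]])
  show ?thesis
  proof (rule borel_measurable_LIMSEQ_real[where u="\<lambda>n x. if x \<in> X then kexp_eval K (S n) x else 0"])
    show "(\<lambda>n. if x \<in> X then kexp_eval K (S n) x else 0) \<longlonglongrightarrow> (if x \<in> X then \<phi> x else 0)" for x
      using Sl[of x] by (cases "x \<in> X") simp_all
    show "(\<lambda>x. if x \<in> X then kexp_eval K (S n) x else 0) \<in> borel_measurable borel" for n
      by (rule borel_measurable_continuous_on_if[OF XB kexp_eval_cont[OF m Sx]]) auto
  qed
qed

definition permT :: "('a::euclidean_space \<Rightarrow> 'a) \<Rightarrow> 'a \<Rightarrow> 'a" where
  "permT \<tau> x = (\<Sum>b\<in>Basis. (x \<bullet> \<tau> b) *\<^sub>R b)"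

lemma permT_inner: "b \<in> Basis \<Longrightarrow> permT \<tau> x \<bullet> b = x \<bullet> \<tau> b"
  unfolding permT_def by simp

lemma permT_meas[measurable]: "permT \<tau> \<in> borel_measurable borel"
  unfolding permT_def by measurable

lemma lborel_perm:
  fixes \<tau> :: "'a::euclidean_space \<Rightarrow> 'a"
  assumes bij: "bij_betw \<tau> Basis Basis" and inv: "\<And>b. b \<in> Basis \<Longrightarrow> \<tau> (\<tau> b) = b"
  shows "distr lborel borel (permT \<tau>) = lborel"
proof (rule lborel_eqI[symmetric])
  have tB: "\<And>b. b \<in> Basis \<Longrightarrow> \<tau> b \<in> Basis" using bij bij_betwE by blast
  fix l u :: 'a assume le: "\<And>b. b \<in> Basis \<Longrightarrow> l \<bullet> b \<le> u \<bullet> b"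
  have pre: "permT \<tau> -` box l u = box (permT \<tau> l) (permT \<tau> u)"
  proof (intro set_eqI iffI)
    fix x assume "x \<in> permT \<tau> -` box l u"
    then have h: "\<And>b. b \<in> Basis \<Longrightarrow> l \<bullet> b < x \<bullet> \<tau> b \<and> x \<bullet> \<tau> b < u \<bullet> b"
      by (auto simp: mem_box permT_inner)
    show "x \<in> box (permT \<tau> l) (permT \<tau> u)"
      unfolding mem_box
    proof
      fix b :: 'a assume b: "b \<in> Basis"
      show "permT \<tau> l \<bullet> b < x \<bullet> b \<and> x \<bullet> b < permT \<tau> u \<bullet> b"
        using h[of "\<tau> b"] tB[of b] b by (simp add: permT_inner inv)
    qed
  next
    fix x assume "x \<in> box (permT \<tau> l) (permT \<tau> u)"
    then have h: "\<And>b. b \<in> Basis \<Longrightarrow> l \<bullet> \<tau> b < x \<bullet> b \<and> x \<bullet> b < u \<bullet> \<tau> b"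
      by (auto simp: mem_box permT_inner)
    show "x \<in> permT \<tau> -` box l u"
      unfolding mem_box vimage_eq
    proof
      fix b :: 'a assume b: "b \<in> Basis"
      show "l \<bullet> b < permT \<tau> x \<bullet> b \<and> permT \<tau> x \<bullet> b < u \<bullet> b"
        using h[of "\<tau> b"] tB[of b] b by (simp add: permT_inner inv)
    qed
  qed
  have "emeasure (distr lborel borel (permT \<tau>)) (box l u) = emeasure lborel (box (permT \<tau> l) (permT \<tau> u))"
    by (simp add: emeasure_distr pre)
  also have "\<dots> = (\<Prod>b\<in>Basis. (permT \<tau> u - permT \<tau> l) \<bullet> b)"
    using le tB by (simp add: emeasure_lborel_box_eq permT_inner inner_diff_left)
  also have "(\<Prod>b\<in>Basis. (permT \<tau> u - permT \<tau> l) \<bullet> b) = (\<Prod>b\<in>Basis. (u - l) \<bullet> \<tau> b)"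
    by (intro prod.cong) (auto simp: permT_inner inner_diff_left)
  also have "\<dots> = (\<Prod>b\<in>Basis. (u - l) \<bullet> b)"
    by (rule prod.reindex_bij_betw[OF bij])
  finally show "emeasure (distr lborel borel (permT \<tau>)) (box l u) = (\<Prod>b\<in>Basis. (u - l) \<bullet> b)" .
next
  show "sets (distr lborel borel (permT \<tau>)) = sets borel" by simp
qed

lemma norm_sq_Basis: "(norm x)^2 = (\<Sum>b\<in>Basis. (x \<bullet> b)^2)"
proof -
  have "(norm x)^2 = x \<bullet> x" by (rule power2_norm_eq_inner)
  also have "\<dots> = (\<Sum>b\<in>Basis. (x \<bullet> b) * (x \<bullet> b))" by (rule euclidean_inner)
  finally show ?thesis by (simp add: power2_eq_square)
qed

definition reflT :: "'a::euclidean_space \<Rightarrow> 'a \<Rightarrow> 'a" where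
  "reflT i x = (\<Sum>b\<in>Basis. ((if b = i then -1 else 1) * (x \<bullet> b)) *\<^sub>R b)"

lemma reflT_inner: "b \<in> Basis \<Longrightarrow> reflT i x \<bullet> b = (if b = i then - (x \<bullet> b) else x \<bullet> b)"
  unfolding reflT_def by simp

lemma reflT_meas[measurable]: "reflT i \<in> borel_measurable borel"
  unfolding reflT_def by measurable

lemma lborel_refl: "distr lborel borel (reflT i) = (lborel :: 'a::euclidean_space measure)"
proof -
  have "(lborel :: 'a measure) = density (distr lborel borel (\<lambda>x. 0 + (\<Sum>j\<in>Basis. ((if j = i then -1 else 1) * (x \<bullet> j)) *\<^sub>R j)))
         (\<lambda>_. (\<Prod>j\<in>Basis. \<bar>(if j = i then -1 else 1)::real\<bar>))"
    by (rule lborel_affine_euclidean) auto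
  also have "(\<lambda>x. 0 + (\<Sum>j\<in>Basis. ((if j = i then -1 else 1) * (x \<bullet> j)) *\<^sub>R j)) = reflT i"
    by (simp add: reflT_def fun_eq_iff)
  also have "(\<lambda>_. ennreal (\<Prod>j\<in>Basis. \<bar>(if j = i then -1 else 1)::real\<bar>)) = (\<lambda>_. 1)"
    by (simp add: if_distrib cong: if_cong)
  finally show ?thesis by (simp add: density_1)
qed

lemma norm_permT:
  assumes bij: "bij_betw \<tau> Basis Basis"
  shows "norm (permT \<tau> x) = norm x"
proof -
  have "(norm (permT \<tau> x))^2 = (\<Sum>b\<in>Basis. (permT \<tau> x \<bullet> b)^2)"
    by (rule norm_sq_Basis)
  also have "\<dots> = (\<Sum>b\<in>Basis. (x \<bullet> \<tau> b)^2)" by (intro sum.cong) (auto simp: permT_inner)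
  also have "\<dots> = (\<Sum>b\<in>Basis. (x \<bullet> b)^2)" by (rule sum.reindex_bij_betw[OF bij])
  also have "\<dots> = (norm x)^2" by (rule norm_sq_Basis[symmetric])
  finally show ?thesis by simp
qed

lemma norm_reflT: "norm (reflT i x) = norm x"
proof -
  have "(norm (reflT i x))^2 = (\<Sum>b\<in>Basis. (reflT i x \<bullet> b)^2)"
    by (rule norm_sq_Basis)
  also have "\<dots> = (\<Sum>b\<in>Basis. (x \<bullet> b)^2)" by (intro sum.cong) (auto simp: reflT_inner)
  also have "\<dots> = (norm x)^2" by (rule norm_sq_Basis[symmetric])
  finally show ?thesis by simp
qed

definition Gk :: "'a::euclidean_space \<Rightarrow> real" where
  "Gk w = indicator (cball 0 1) w * exp (- (norm w)\<^sup>2 / 2)"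

lemma Gk_meas[measurable]: "Gk \<in> borel_measurable borel"
proof -
  have [measurable]: "cball (0::'a) 1 \<in> sets borel" by (simp add: borel_closed)
  have [measurable]: "(\<lambda>w::'a. exp (- (norm w)\<^sup>2 / 2)) \<in> borel_measurable borel"
    by (intro borel_measurable_continuous_onI continuous_intros) auto
  show ?thesis unfolding Gk_def by measurable
qed

lemma Gk_norm: "norm (T w) = norm w \<Longrightarrow> Gk (T w) = Gk w"
  unfolding Gk_def by (simp add: indicator_def)

lemma Gk_refl: "Gk (reflT i w) = Gk w" by (rule Gk_norm[OF norm_reflT])
lemma Gk_perm: "bij_betw \<tau> Basis Basis \<Longrightarrow> Gk (permT \<tau> w) = Gk w" by (rule Gk_norm[OF norm_permT])

lemma Gk_integrable:
  fixes p :: "'a::euclidean_space \<Rightarrow> real"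
  assumes "continuous_on UNIV p"
  shows "integrable lborel (\<lambda>w. Gk w * p w)"
proof -
  have "integrable lborel (\<lambda>x. indicator (cball (0::'a) 1) x *\<^sub>R (exp (- (norm x)\<^sup>2 / 2) * p x))"
    by (rule borel_integrable_compact)
       (auto intro!: continuous_intros continuous_on_subset[OF assms])
  then show ?thesis unfolding Gk_def by (simp add: mult.assoc)
qed

lemma integral_transform:
  fixes F :: "'a::euclidean_space \<Rightarrow> real"
  assumes T: "distr lborel borel T = lborel" and Tm: "T \<in> borel_measurable borel"
    and F: "F \<in> borel_measurable borel"
  shows "(\<integral>w. F w \<partial>lborel) = (\<integral>w. F (T w) \<partial>lborel)"
proof -
  have "(\<integral>w. F w \<partial>lborel) = (\<integral>w. F w \<partial>distr lborel borel T)" by (simp add: T)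
  also have "\<dots> = (\<integral>w. F (T w) \<partial>lborel)" by (rule integral_distr[OF _ F]) (simp add: Tm)
  finally show ?thesis .
qed

definition Imom :: "'a::euclidean_space \<Rightarrow> 'a \<Rightarrow> real" where
  "Imom i j = (\<integral>w. Gk w * ((w \<bullet> i) * (w \<bullet> j)) \<partial>lborel)"

lemma Imom_cross:
  fixes i j :: "'a::euclidean_space"
  assumes i: "i \<in> Basis" and j: "j \<in> Basis" and ij: "i \<noteq> j"
  shows "Imom i j = 0"
proof -
  have "Imom i j = (\<integral>w. Gk (reflT i w) * ((reflT i w \<bullet> i) * (reflT i w \<bullet> j)) \<partial>lborel)"
    unfolding Imom_def by (rule integral_transform[OF lborel_refl reflT_meas]) measurable
  also have "\<dots> = (\<integral>w. - (Gk w * ((w \<bullet> i) * (w \<bullet> j))) \<partial>lborel)"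
    using i j ij by (simp add: reflT_inner Gk_refl)
  also have "\<dots> = - Imom i j" unfolding Imom_def by simp
  finally show ?thesis by simp
qed

lemma Imom_diag:
  fixes i j :: "'a::euclidean_space"
  assumes i: "i \<in> Basis" and j: "j \<in> Basis"
  shows "Imom i i = Imom j j"
proof -
  define \<tau> where "\<tau> = (\<lambda>b::'a. if b = i then j else if b = j then i else b)"
  have "\<tau> i = j" unfolding \<tau>_def by simp
  have inv: "\<And>b. \<tau> (\<tau> b) = b" unfolding \<tau>_def by auto
  have im: "\<tau> ` Basis \<subseteq> Basis" unfolding \<tau>_def using i j by auto
  have bij: "bij_betw \<tau> Basis Basis"
    by (rule bij_betw_byWitness[of Basis \<tau> \<tau>]) (use inv im in auto)
  have "Imom i i = (\<integral>w. Gk (permT \<tau> w) * ((permT \<tau> w \<bullet> i) * (permT \<tau> w \<bullet> i)) \<partial>lborel)"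
    unfolding Imom_def by (rule integral_transform[OF lborel_perm[OF bij inv] permT_meas]) measurable
  also have "\<dots> = Imom j j"
    unfolding Imom_def using i using i \<open>\<tau> i = j\<close> by (simp add: permT_inner Gk_perm[OF bij])
  finally show ?thesis .
qed

lemma Gk_moment:
  fixes v :: "'a::euclidean_space"
  shows "(\<integral>w. Gk w * (v \<bullet> w)\<^sup>2 \<partial>lborel) = (norm v)\<^sup>2 / real DIM('a) * M2_tilde TYPE('a)"
proof -
  define b0 :: 'a where "b0 = (SOME b. b \<in> Basis)"
  have b0: "b0 \<in> Basis" unfolding b0_def by (rule SOME_Basis)
  define I0 where "I0 = Imom b0 b0"
  have diag: "\<And>i::'a. i \<in> Basis \<Longrightarrow> Imom i i = I0" unfolding I0_def using b0 Imom_diag by metis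
  have intij: "\<And>i j::'a. integrable lborel (\<lambda>w. Gk w * ((w \<bullet> i) * (w \<bullet> j)))"
    by (rule Gk_integrable) (auto intro!: continuous_intros)
  have sq: "(v \<bullet> w)\<^sup>2 = (\<Sum>i\<in>(Basis::'a set). \<Sum>j\<in>(Basis::'a set). (v \<bullet> i) * (v \<bullet> j) * ((w \<bullet> i) * (w \<bullet> j)))" for w
  proof -
    have "v \<bullet> w = (\<Sum>i\<in>(Basis::'a set). (v \<bullet> i) * (w \<bullet> i))" by (rule euclidean_inner)
    then have "(v \<bullet> w)\<^sup>2 = (\<Sum>i\<in>(Basis::'a set). (v \<bullet> i) * (w \<bullet> i)) * (\<Sum>j\<in>(Basis::'a set). (v \<bullet> j) * (w \<bullet> j))"
      by (simp add: power2_eq_square)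
    also have "\<dots> = (\<Sum>i\<in>(Basis::'a set). \<Sum>j\<in>(Basis::'a set). (v \<bullet> i) * (v \<bullet> j) * ((w \<bullet> i) * (w \<bullet> j)))"
      by (simp add: sum_product algebra_simps)
    finally show ?thesis .
  qed
  have "(\<integral>w. Gk w * (v \<bullet> w)\<^sup>2 \<partial>lborel)
      = (\<integral>w. (\<Sum>i\<in>(Basis::'a set). \<Sum>j\<in>(Basis::'a set). (v \<bullet> i) * (v \<bullet> j) * (Gk w * ((w \<bullet> i) * (w \<bullet> j)))) \<partial>lborel)"
    by (simp add: sq sum_distrib_left algebra_simps)
  also have "\<dots> = (\<Sum>i\<in>(Basis::'a set). \<Sum>j\<in>(Basis::'a set). (v \<bullet> i) * (v \<bullet> j) * Imom i j)"
    unfolding Imom_def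
    by (simp add: integral_sum intij integrable_sum)
  also have "\<dots> = (\<Sum>i\<in>(Basis::'a set). (v \<bullet> i) * (v \<bullet> i) * I0)"
  proof (rule sum.cong[OF refl])
    fix i :: 'a assume i: "i \<in> Basis"
    have "(\<Sum>j\<in>(Basis::'a set). (v \<bullet> i) * (v \<bullet> j) * Imom i j) = (\<Sum>j\<in>(Basis::'a set). if j = i then (v \<bullet> i) * (v \<bullet> i) * I0 else 0)"
      by (rule sum.cong[OF refl]) (use i diag Imom_cross in auto)
    also have "\<dots> = (v \<bullet> i) * (v \<bullet> i) * I0" using i by simp
    finally show "(\<Sum>j\<in>(Basis::'a set). (v \<bullet> i) * (v \<bullet> j) * Imom i j) = (v \<bullet> i) * (v \<bullet> i) * I0" .
  qed
  also have "\<dots> = (norm v)\<^sup>2 * I0"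
    unfolding norm_sq_Basis[of v] by (simp add: power2_eq_square sum_distrib_right)
  finally have A: "(\<integral>w. Gk w * (v \<bullet> w)\<^sup>2 \<partial>lborel) = (norm v)\<^sup>2 * I0" .
  have "M2_tilde TYPE('a) = (\<integral>w. Gk (w::'a) * (norm w)\<^sup>2 \<partial>lborel)"
    unfolding M2_tilde_def set_lebesgue_integral_def Gk_def by (simp add: mult.assoc)
  also have "\<dots> = (\<integral>w. (\<Sum>i\<in>(Basis::'a set). Gk w * ((w \<bullet> i) * (w \<bullet> i))) \<partial>lborel)"
    unfolding norm_sq_Basis by (simp add: power2_eq_square sum_distrib_left)
  also have "\<dots> = (\<Sum>i\<in>(Basis::'a set). Imom i i)"
    unfolding Imom_def by (simp add: integral_sum intij)
  also have "\<dots> = real DIM('a) * I0" using diag by simp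
  finally have B: "M2_tilde TYPE('a) = real DIM('a) * I0" .
  show ?thesis using A B by simp
qed

lemma M2_nonneg: "M2_tilde TYPE('a::euclidean_space) \<ge> 0"
  unfolding M2_tilde_def set_lebesgue_integral_def
  by (intro Bochner_Integration.integral_nonneg) (auto simp: indicator_def)

lemma scaled_moment:
  fixes x h :: "'a::euclidean_space"
  assumes s: "s > 0"
  shows "(\<integral>\<^sup>+u. ennreal (indicator (cball x s) u * omega s (x - u) * (h \<bullet> (u - x))\<^sup>2) \<partial>lborel)
       = ennreal (s ^ (DIM('a) + 2) * ((norm h)\<^sup>2 / real DIM('a) * M2_tilde TYPE('a)))"
proof -
  define F where "F u = ennreal (indicator (cball x s) u * omega s (x - u) * (h \<bullet> (u - x))\<^sup>2)" for u
  have cb[measurable]: "cball x s \<in> sets borel" by (simp add: borel_closed)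
  have om[measurable]: "(\<lambda>u::'a. omega s (x - u)) \<in> borel_measurable borel"
    unfolding omega_def by (intro borel_measurable_continuous_onI continuous_intros) (use s in auto)
  have Fm[measurable]: "F \<in> borel_measurable borel" unfolding F_def by measurable
  have Fsub: "F (x + s *\<^sub>R w) = ennreal (s\<^sup>2 * (Gk w * (h \<bullet> w)\<^sup>2))" for w
  proof -
    have i: "indicator (cball x s) (x + s *\<^sub>R w) = (indicator (cball 0 1) w :: real)"
      using s by (simp add: indicator_def dist_norm)
    have o: "omega s (x - (x + s *\<^sub>R w)) = exp (- (norm w)\<^sup>2 / 2)"
      using s by (simp add: omega_def power_mult_distrib)
    show ?thesis unfolding F_def i o Gk_def
      by (simp add: inner_scaleR_right power_mult_distrib algebra_simps)
  qed
  have "(\<integral>\<^sup>+u. F u \<partial>lborel) = ennreal (\<bar>s\<bar> ^ DIM('a)) * (\<integral>\<^sup>+w. F (x + s *\<^sub>R w) \<partial>lborel)"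
    by (subst lborel_affine[of s x]) (use s in \<open>simp_all add: nn_integral_density nn_integral_distr nn_integral_cmult\<close>)
  also have "(\<integral>\<^sup>+w. F (x + s *\<^sub>R w) \<partial>lborel) = (\<integral>\<^sup>+w. ennreal (s\<^sup>2 * (Gk w * (h \<bullet> w)\<^sup>2)) \<partial>lborel)"
    by (simp add: Fsub)
  also have "\<dots> = ennreal (\<integral>w. s\<^sup>2 * (Gk w * (h \<bullet> w)\<^sup>2) \<partial>lborel)"
  proof (rule nn_integral_eq_integral)
    show "integrable lborel (\<lambda>w. s\<^sup>2 * (Gk w * (h \<bullet> w)\<^sup>2))"
      by (intro integrable_mult_right Gk_integrable) (auto intro!: continuous_intros)
    show "AE w in lborel. 0 \<le> s\<^sup>2 * (Gk w * (h \<bullet> w)\<^sup>2)"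
      by (auto simp: Gk_def indicator_def)
  qed
  also have "(\<integral>w. s\<^sup>2 * (Gk w * (h \<bullet> w)\<^sup>2) \<partial>lborel) = s\<^sup>2 * ((norm h)\<^sup>2 / real DIM('a) * M2_tilde TYPE('a))"
    by (simp add: Gk_moment)
  finally have "(\<integral>\<^sup>+u. F u \<partial>lborel) = ennreal (s ^ DIM('a)) * ennreal (s\<^sup>2 * ((norm h)\<^sup>2 / real DIM('a) * M2_tilde TYPE('a)))"
    using s by simp
  also have "\<dots> = ennreal (s ^ (DIM('a) + 2) * ((norm h)\<^sup>2 / real DIM('a) * M2_tilde TYPE('a)))"
    using s M2_nonneg[where 'a='a] by (simp add: ennreal_mult[symmetric] power_add mult.assoc power2_eq_square)
  finally show ?thesis unfolding F_def .
qed

lemma cball_in_X: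
  fixes X :: "'a::euclidean_space set"
  assumes x: "x \<in> X" and d: "infdist x (frontier X) > s"
  shows "cball x s \<subseteq> X"
proof
  fix y assume y: "y \<in> cball x s"
  show "y \<in> X"
  proof (rule ccontr)
    assume "y \<notin> X"
    have "x \<in> cball x s" using y by (simp add: dist_commute) (meson dist_not_less_zero order.trans not_le)
    have "cball x s \<inter> frontier X \<noteq> {}"
    proof (rule connected_Int_frontier)
      show "connected (cball x s)" by simp
      show "cball x s \<inter> X \<noteq> {}" using x \<open>x \<in> cball x s\<close> by blast
      show "cball x s - X \<noteq> {}" using y \<open>y \<notin> X\<close> by blast
    qed
    then obtain z where z: "z \<in> cball x s" "z \<in> frontier X" by blast
    have "infdist x (frontier X) \<le> dist x z" by (rule infdist_le[OF z(2)])
    also have "\<dots> \<le> s" using z(1) by simp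
    finally show False using d by simp
  qed
qed

lemma omega_meas[measurable]: "omega s \<in> borel_measurable (borel :: 'a::euclidean_space measure)"
proof (cases "s = 0")
  case True then show ?thesis unfolding omega_def by simp
next
  case False then show ?thesis
    unfolding omega_def by (intro borel_measurable_continuous_onI continuous_intros) auto
qed

lemma infdist_meas[measurable]: "(\<lambda>x::'a::euclidean_space. infdist x A) \<in> borel_measurable borel"
  by (intro borel_measurable_continuous_onI continuous_at_imp_continuous_on ballI continuous_infdist continuous_ident)

lemma omega_le1: "omega s x \<le> 1"
  unfolding omega_def by simp

lemma omega_nonneg: "omega s x \<ge> 0"
  unfolding omega_def by simp

theorem lemma1:
  fixes X :: "'a::euclidean_space set"
    and \<rho> :: "('a \<times> real) measure"
    and f\<^sub>\<rho> :: "'a \<Rightarrow> real"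
    and grad :: "'a \<Rightarrow> 'a"
    and K :: "'a \<Rightarrow> 'a \<Rightarrow> real"
    and pd :: "'a \<Rightarrow> real"
    and c\<^sub>\<rho> \<theta> s r :: real
    and f :: "'a \<Rightarrow> 'a"
  assumes "compact X"
    and "prob_space \<rho>" and "sets \<rho> = sets borel" and "emeasure \<rho> (X \<times> UNIV) = 1"
    and "integrable \<rho> snd"
    and "f\<^sub>\<rho> \<in> borel_measurable borel"
    and "\<And>A. A \<in> sets borel \<Longrightarrow>
           (LINT z:(A \<times> UNIV)|\<rho>. snd z) = (LINT x:A|distr \<rho> borel fst. f\<^sub>\<rho> x)"
    and "mercer_kernel X K"
    and "c\<^sub>\<rho> > 0" and "0 < \<theta>" and "\<theta> \<le> 1"
    and "\<And>t. t > 0 \<Longrightarrow>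
           measure (distr \<rho> borel fst) {x\<in>X. infdist x (frontier X) < t} \<le> c\<^sub>\<rho> * t"
    and "pd \<in> borel_measurable borel" and "\<And>x. pd x \<ge> 0"
    and "distr \<rho> borel fst = density lborel (\<lambda>x. ennreal (pd x))"
    and "\<And>x. x \<in> X \<Longrightarrow> pd x \<le> c\<^sub>\<rho>"
    and "\<And>x u. x \<in> X \<Longrightarrow> u \<in> X \<Longrightarrow> \<bar>pd x - pd u\<bar> \<le> c\<^sub>\<rho> * norm (x - u) powr \<theta>"
    and "\<And>x. x \<in> X \<Longrightarrow> (f\<^sub>\<rho> has_derivative (\<lambda>h. grad x \<bullet> h)) (at x within X)"
    and "\<And>i. i \<in> Basis \<Longrightarrow> in_rkhs X K (\<lambda>x. grad x \<bullet> i)"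
    and "s > 0" and "r \<ge> 1" and "f \<in> F_ball X K r"
  shows "M2_tilde TYPE('a) * s powr (real DIM('a) + 2 + \<theta>) / real DIM('a)
           * (LINT x:(X_s X pd c\<^sub>\<rho> \<theta> s)|distr \<rho> borel fst. (norm (f x - grad x))\<^sup>2)
         \<le> Q_fun X (distr \<rho> borel fst) s grad f"
proof -
  note X = assms(1) and m = assms(8) and pdm[measurable] = assms(13) and pd0 = assms(14)
  note hold = assms(17) and s = assms(20)
  define M where "M = distr \<rho> borel fst"
  have Md: "M = density lborel (\<lambda>x. ennreal (pd x))" using assms(15) unfolding M_def .
  have Msets[measurable_cong]: "sets M = sets borel" by (simp add: M_def)
  have fstm: "fst \<in> measurable \<rho> borel"
    by (simp add: measurable_cong_sets[OF assms(3) refl] borel_measurable_continuous_onI continuous_on_fst continuous_on_id)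
  have Mprob: "prob_space M" unfolding M_def
    by (rule prob_space.prob_space_distr[OF assms(2) fstm])
  interpret Mp: prob_space M by (rule Mprob)
  have XB[measurable]: "X \<in> sets borel" by (rule borel_closed[OF compact_imp_closed[OF X]])
  have frk: "\<And>i. i \<in> Basis \<Longrightarrow> in_rkhs X K (\<lambda>x. f x \<bullet> i)"
    using assms(22) unfolding F_ball_def by blast
  note grk = assms(19)
  define H where "H x = (if x \<in> X then f x - grad x else 0)" for x
  have Hm[measurable]: "H \<in> borel_measurable borel"
  proof -
    have "H = (\<lambda>x. \<Sum>b\<in>Basis. ((if x \<in> X then f x \<bullet> b else 0) - (if x \<in> X then grad x \<bullet> b else 0)) *\<^sub>R b)"
      by (rule ext) (auto simp: H_def inner_diff_left[symmetric] euclidean_representation)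
    also have "\<dots> \<in> borel_measurable borel"
      by (intro borel_measurable_sum borel_measurable_scaleR borel_measurable_diff borel_measurable_const
            rkhs_measurable[OF X m] frk grk)
    finally show ?thesis .
  qed
  have "\<forall>b\<in>Basis. \<exists>B. \<forall>x\<in>X. \<bar>f x \<bullet> b\<bar> \<le> B" using rkhs_bounded[OF X m frk] by blast
  then obtain Bf where Bf: "\<And>b x. b \<in> Basis \<Longrightarrow> x \<in> X \<Longrightarrow> \<bar>f x \<bullet> b\<bar> \<le> Bf b" by metis
  have "\<forall>b\<in>Basis. \<exists>B. \<forall>x\<in>X. \<bar>grad x \<bullet> b\<bar> \<le> B" using rkhs_bounded[OF X m grk] by blast
  then obtain Bg where Bg: "\<And>b x. b \<in> Basis \<Longrightarrow> x \<in> X \<Longrightarrow> \<bar>grad x \<bullet> b\<bar> \<le> Bg b" by metis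
  define B where "B = (\<Sum>b\<in>Basis. Bf b + Bg b)"
  have HB: "norm (H x) \<le> B" if "x \<in> X" for x
  proof -
    have "norm (H x) \<le> (\<Sum>b\<in>Basis. \<bar>H x \<bullet> b\<bar>)" by (rule norm_le_l1)
    also have "\<dots> \<le> B" unfolding B_def
    proof (rule sum_mono)
      fix b :: 'a assume b: "b \<in> Basis"
      have "\<bar>H x \<bullet> b\<bar> = \<bar>f x \<bullet> b - grad x \<bullet> b\<bar>" using that by (simp add: H_def inner_diff_left)
      also have "\<dots> \<le> Bf b + Bg b" using Bf[OF b that] Bg[OF b that] by linarith
      finally show "\<bar>H x \<bullet> b\<bar> \<le> Bf b + Bg b" .
    qed
    finally show ?thesis .
  qed
  obtain R where R: "\<And>x. x \<in> X \<Longrightarrow> norm x \<le> R" using compact_imp_bounded[OF X] unfolding bounded_iff by blast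
  define D where "D = 2 * R"
  have DX: "norm (u - x) \<le> D" if "x \<in> X" "u \<in> X" for x u
    using norm_triangle_ineq4[of u x] R[OF that(1)] R[OF that(2)] unfolding D_def by linarith
  define F2 where "F2 x u = indicator X x * indicator X u * (omega s (x - u) * (H x \<bullet> (u - x))\<^sup>2)" for x u
  have F2m[measurable]: "(\<lambda>p. F2 (fst p) (snd p)) \<in> borel_measurable (M \<Otimes>\<^sub>M M)"
    unfolding F2_def by measurable
  have F2m1[measurable]: "(\<lambda>x. F2 x u) \<in> borel_measurable M" for u
    unfolding F2_def by measurable
  have F2m2[measurable]: "(\<lambda>u. F2 x u) \<in> borel_measurable borel" for x
    unfolding F2_def by measurable
  have F2nn: "F2 x u \<ge> 0" for x u unfolding F2_def by (simp add: omega_nonneg)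
  have F2B: "F2 x u \<le> (B * D)\<^sup>2" for x u
  proof (cases "x \<in> X \<and> u \<in> X")
    case True
    have "\<bar>H x \<bullet> (u - x)\<bar> \<le> norm (H x) * norm (u - x)" by (rule Cauchy_Schwarz_ineq2)
    also have "\<dots> \<le> B * D" using HB[of x] DX[of x u] True by (intro mult_mono) (auto intro: order.trans[OF norm_ge_zero])
    finally have "(H x \<bullet> (u - x))\<^sup>2 \<le> (B * D)\<^sup>2"
      by (metis abs_ge_zero abs_le_square_iff abs_of_nonneg order.trans power2_abs)
    moreover have "omega s (x - u) * (H x \<bullet> (u - x))\<^sup>2 \<le> 1 * (H x \<bullet> (u - x))\<^sup>2"
      by (intro mult_right_mono omega_le1) simp
    ultimately show ?thesis using True unfolding F2_def by simp
  next
    case False then show ?thesis unfolding F2_def by auto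
  qed
  define J where "J u = (\<integral>\<^sup>+x. ennreal (F2 x u) \<partial>M)" for u
  have Jle: "J u \<le> ennreal ((B * D)\<^sup>2)" for u
  proof -
    have "J u \<le> (\<integral>\<^sup>+x. ennreal ((B * D)\<^sup>2) \<partial>M)" unfolding J_def
      by (intro nn_integral_mono ennreal_leI F2B)
    also have "\<dots> = ennreal ((B * D)\<^sup>2)" by (simp add: Mp.emeasure_space_1)
    finally show ?thesis .
  qed
  have Jfin: "J u < top" for u using Jle[of u] by (simp add: le_less_trans)
  have Jm[measurable]: "J \<in> borel_measurable M"
    unfolding J_def F2_def by measurable
  have inner: "indicator X u *\<^sub>R (\<integral>x. indicator X x *\<^sub>R (omega s (x - u) * ((f x - grad x) \<bullet> (u - x))\<^sup>2) \<partial>M)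
      = enn2real (J u)" for u
  proof -
    have "indicator X u *\<^sub>R (\<integral>x. indicator X x *\<^sub>R (omega s (x - u) * ((f x - grad x) \<bullet> (u - x))\<^sup>2) \<partial>M)
       = (\<integral>x. indicator X u * (indicator X x *\<^sub>R (omega s (x - u) * ((f x - grad x) \<bullet> (u - x))\<^sup>2)) \<partial>M)"
      by simp
    also have "\<dots> = (\<integral>x. F2 x u \<partial>M)"
      by (intro Bochner_Integration.integral_cong refl) (auto simp: F2_def H_def indicator_def)
    also have "\<dots> = enn2real (J u)" unfolding J_def
      by (rule integral_eq_nn_integral) (auto simp: F2nn)
    finally show ?thesis .
  qed
  have Qeq: "Q_fun X M s grad f = enn2real (\<integral>\<^sup>+u. J u \<partial>M)"
  proof -
    have "Q_fun X M s grad f = (\<integral>u. enn2real (J u) \<partial>M)"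
      unfolding Q_fun_def set_lebesgue_integral_def using inner by simp
    also have "\<dots> = enn2real (\<integral>\<^sup>+u. ennreal (enn2real (J u)) \<partial>M)"
      by (rule integral_eq_nn_integral) auto
    also have "\<dots> = enn2real (\<integral>\<^sup>+u. J u \<partial>M)"
      using Jfin by (simp add: ennreal_enn2real)
    finally show ?thesis .
  qed
  interpret P: pair_sigma_finite M M
    unfolding pair_sigma_finite_def using Mp.sigma_finite_measure_axioms by simp
  have Fub: "(\<integral>\<^sup>+u. J u \<partial>M) = (\<integral>\<^sup>+x. (\<integral>\<^sup>+u. ennreal (F2 x u) \<partial>M) \<partial>M)"
    unfolding J_def using P.Fubini[of "\<lambda>p. ennreal (F2 (fst p) (snd p))"] by simp
  have Tfin: "(\<integral>\<^sup>+u. J u \<partial>M) < top"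
  proof -
    have "(\<integral>\<^sup>+u. J u \<partial>M) \<le> (\<integral>\<^sup>+u. ennreal ((B * D)\<^sup>2) \<partial>M)" by (intro nn_integral_mono Jle)
    also have "\<dots> = ennreal ((B * D)\<^sup>2)" by (simp add: Mp.emeasure_space_1)
    finally show ?thesis by (simp add: le_less_trans)
  qed
  define Xs where "Xs = X_s X pd c\<^sub>\<rho> \<theta> s"
  have Xs_sub: "Xs \<subseteq> X" unfolding Xs_def X_s_def by auto
  have Xsm[measurable]: "Xs \<in> sets borel" unfolding Xs_def X_s_def by measurable
  define C where "C = M2_tilde TYPE('a) * s powr (real DIM('a) + 2 + \<theta>) / real DIM('a)"
  have C0: "C \<ge> 0" unfolding C_def using M2_nonneg[where 'a='a] by simp
  have low: "ennreal (C * (indicator Xs x * (norm (H x))\<^sup>2)) \<le> (\<integral>\<^sup>+u. ennreal (F2 x u) \<partial>M)" for x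
  proof (cases "x \<in> Xs")
    case False then show ?thesis by simp
  next
    case True
    then have xX: "x \<in> X" and xd: "infdist x (frontier X) > s" and xp: "pd x \<ge> (1 + c\<^sub>\<rho>) * s powr \<theta>"
      unfolding Xs_def X_s_def by auto
    have cb: "cball x s \<subseteq> X" by (rule cball_in_X[OF xX xd])
    have pdu: "pd u \<ge> s powr \<theta>" if u: "u \<in> cball x s" for u
    proof -
      have uX: "u \<in> X" using cb u by auto
      have "norm (x - u) \<le> s" using u by (simp add: dist_norm)
      then have "norm (x - u) powr \<theta> \<le> s powr \<theta>" using assms(10) by (intro powr_mono2) auto
      then have "c\<^sub>\<rho> * norm (x - u) powr \<theta> \<le> c\<^sub>\<rho> * s powr \<theta>" using assms(9) by simp
      then show ?thesis using hold[OF xX uX] xp by (simp add: algebra_simps abs_le_iff)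
    qed
    have "(\<integral>\<^sup>+u. ennreal (F2 x u) \<partial>M) = (\<integral>\<^sup>+u. ennreal (pd u) * ennreal (F2 x u) \<partial>lborel)"
      unfolding Md by (rule nn_integral_density) auto
    also have "\<dots> \<ge> (\<integral>\<^sup>+u. ennreal (s powr \<theta>) * ennreal (indicator (cball x s) u * omega s (x - u) * (H x \<bullet> (u - x))\<^sup>2) \<partial>lborel)"
    proof (intro nn_integral_mono)
      fix u
      show "ennreal (s powr \<theta>) * ennreal (indicator (cball x s) u * omega s (x - u) * (H x \<bullet> (u - x))\<^sup>2)
          \<le> ennreal (pd u) * ennreal (F2 x u)"
      proof (cases "u \<in> cball x s")
        case False then show ?thesis by simp
      next
        case True
        then have "F2 x u = indicator (cball x s) u * omega s (x - u) * (H x \<bullet> (u - x))\<^sup>2"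
          using cb xX unfolding F2_def by auto
        then show ?thesis
          by (simp only:) (intro mult_right_mono ennreal_leI pdu[OF True]; simp)
      qed
    qed
    also have "(\<integral>\<^sup>+u. ennreal (s powr \<theta>) * ennreal (indicator (cball x s) u * omega s (x - u) * (H x \<bullet> (u - x))\<^sup>2) \<partial>lborel)
        = ennreal (s powr \<theta>) * ennreal (s ^ (DIM('a) + 2) * ((norm (H x))\<^sup>2 / real DIM('a) * M2_tilde TYPE('a)))"
    proof -
      have [measurable]: "cball x s \<in> sets borel" by (simp add: borel_closed)
      have mf: "(\<lambda>u. ennreal (indicator (cball x s) u * omega s (x - u) * (H x \<bullet> (u - x))\<^sup>2)) \<in> borel_measurable lborel"
        by measurable
      show ?thesis using nn_integral_cmult[OF mf, of "ennreal (s powr \<theta>)"] scaled_moment[OF s, of x "H x"] by (simp only:)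
    qed
    also have "\<dots> = ennreal (C * (indicator Xs x * (norm (H x))\<^sup>2))"
    proof -
      have e1: "s powr (real DIM('a) + 2 + \<theta>) = s powr (real (DIM('a) + 2)) * s powr \<theta>"
        by (simp add: powr_add)
      have e2: "s powr (real (DIM('a) + 2)) = s ^ (DIM('a) + 2)" by (rule powr_realpow[OF s])
      have r: "s powr \<theta> * (s ^ (DIM('a) + 2) * ((norm (H x))\<^sup>2 / real DIM('a) * M2_tilde TYPE('a)))
          = C * (indicator Xs x * (norm (H x))\<^sup>2)"
        unfolding C_def e1 e2 using True by simp
      have n1: "0 \<le> s powr \<theta>" by simp
      have n2: "0 \<le> s ^ (DIM('a) + 2) * ((norm (H x))\<^sup>2 / real DIM('a) * M2_tilde TYPE('a))"
        using s M2_nonneg[where 'a='a] by simp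
      show ?thesis unfolding ennreal_mult[OF n1 n2, symmetric] r ..
    qed
    finally show ?thesis .
  qed
  have "(\<integral>\<^sup>+x. ennreal (C * (indicator Xs x * (norm (H x))\<^sup>2)) \<partial>M) \<le> (\<integral>\<^sup>+u. J u \<partial>M)"
    unfolding Fub by (intro nn_integral_mono low)
  moreover have "(\<integral>\<^sup>+x. ennreal (C * (indicator Xs x * (norm (H x))\<^sup>2)) \<partial>M)
      = ennreal C * (\<integral>\<^sup>+x. ennreal (indicator Xs x * (norm (H x))\<^sup>2) \<partial>M)"
    using C0 by (subst nn_integral_cmult[symmetric]) (auto simp: ennreal_mult)
  ultimately have LE: "ennreal C * (\<integral>\<^sup>+x. ennreal (indicator Xs x * (norm (H x))\<^sup>2) \<partial>M) \<le> (\<integral>\<^sup>+u. J u \<partial>M)"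
    by simp
  have LHS: "(LINT x:Xs|M. (norm (f x - grad x))\<^sup>2) = enn2real (\<integral>\<^sup>+x. ennreal (indicator Xs x * (norm (H x))\<^sup>2) \<partial>M)"
  proof -
    have "(LINT x:Xs|M. (norm (f x - grad x))\<^sup>2) = (\<integral>x. indicator Xs x * (norm (H x))\<^sup>2 \<partial>M)"
      unfolding set_lebesgue_integral_def
      by (intro Bochner_Integration.integral_cong refl) (use Xs_sub in \<open>auto simp: H_def indicator_def\<close>)
    also have "\<dots> = enn2real (\<integral>\<^sup>+x. ennreal (indicator Xs x * (norm (H x))\<^sup>2) \<partial>M)"
      by (rule integral_eq_nn_integral) auto
    finally show ?thesis .
  qed
  have "C * (LINT x:Xs|M. (norm (f x - grad x))\<^sup>2) = enn2real (ennreal C * (\<integral>\<^sup>+x. ennreal (indicator Xs x * (norm (H x))\<^sup>2) \<partial>M))"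
    unfolding LHS using C0 by (simp add: enn2real_mult)
  also have "\<dots> \<le> enn2real (\<integral>\<^sup>+u. J u \<partial>M)" by (rule enn2real_mono[OF LE Tfin])
  also have "\<dots> = Q_fun X M s grad f" by (rule Qeq[symmetric])
  finally show ?thesis unfolding C_def Xs_def M_def .
qed

end
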